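(* Let $x$ be an infinite word and let $k,\lambda\in\mathbb{N}=\{1,2,3,\dots\}$ be such that $$\underline{d}(\mathrm{AP}(x,k,\lambda)) < \left(1+\left\lfloor\frac{k^2-k}{\lambda^2+\lambda}\right\rfloor\right)^{-1}.$$ Then for every positive integer $\ell$ there is a word $u$ with $|u|\le (k-1)\left\lfloor\frac{k^2-k}{\lambda^2+\lambda}\right\rfloor$ such that $u^\ell$ is a factor of $x$.
   Context: A factor is a contiguous subword; $|u|$ is the length of $u$ and $u^\ell$ is $\ell$ concatenated copies of $u$. A $(k,\lambda)$-anti-power is a word $w=w_1\cdots w_k$ with $|w_1|=\cdots=|w_k|$ such that $|\{i: w_i=w_j\}|\le\lambda$ for each $j\in\{1,\dots,k\}$. $\mathrm{AP}(x,k,\lambda)$ is the set of $m\in\mathbb{N}$ such that the prefix of $x$ of length $km$ is a $(k,\lambda)$-anti-power. For $S\subseteq\mathbb{N}$, the lower density is $\underline{d}(S)=\liminf_{n\to\infty}|S\cap\{1,\dots,n\}|/n$. *)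

theory Defs
  imports Complex_Main "HOL-Library.Extended_Real" "HOL-Library.Liminf_Limsup"
begin

definition pref :: "(nat \<Rightarrow> 'a) \<Rightarrow> nat \<Rightarrow> 'a list" where
  "pref x n = map x [0..<n]"

definition is_factor :: "'a list \<Rightarrow> (nat \<Rightarrow> 'a) \<Rightarrow> bool" where
  "is_factor u x \<longleftrightarrow> (\<exists>i. \<forall>j<length u. x (i + j) = u ! j)"

definition lpow :: "'a list \<Rightarrow> nat \<Rightarrow> 'a list" where
  "lpow u l = concat (replicate l u)"

text \<open>(k,lambda)-anti-power: w = w_1...w_k with equal-length blocks, each block
  occurring at most lambda times among the blocks (blocks indexed 0..k-1 here).\<close>
definition anti_power :: "nat \<Rightarrow> nat \<Rightarrow> 'a list \<Rightarrow> bool" where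
  "anti_power k lam w \<longleftrightarrow> (\<exists>m. length w = k * m \<and>
     (\<forall>j<k. card {i. i < k \<and> take m (drop (i*m) w) = take m (drop (j*m) w)} \<le> lam))"

definition AP :: "(nat \<Rightarrow> 'a) \<Rightarrow> nat \<Rightarrow> nat \<Rightarrow> nat set" where
  "AP x k lam = {m. m \<ge> 1 \<and> anti_power k lam (pref x (k * m))}"

definition lower_density :: "nat set \<Rightarrow> ereal" where
  "lower_density S = liminf (\<lambda>n. ereal (real (card (S \<inter> {1..n})) / real n))"

end

theory Submission imports Defs begin
lemma dens_step:
  fixes S :: "nat set" and N :: nat
  assumes "lower_density S < ereal (1 / (1 + real N))"
  shows "\<exists>y::real. y < 1/(1+real N) \<and> (\<forall>M. \<exists>n\<ge>M. real (card (S \<inter> {1..n})) / real n \<le> y)"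
proof -
  let ?f = "\<lambda>n. ereal (real (card (S \<inter> {1..n})) / real n)"
  have "\<not> ereal (1/(1+real N)) \<le> liminf ?f" using assms unfolding lower_density_def by auto
  then obtain z where z: "z < ereal (1/(1+real N))" and nev: "\<not> eventually (\<lambda>n. z < ?f n) sequentially"
    unfolding le_Liminf_iff by auto
  hence fr: "\<forall>M. \<exists>n\<ge>M. ?f n \<le> z" unfolding eventually_sequentially by (auto simp: not_less)
  then obtain n0 where "?f n0 \<le> z" by blast
  hence "z \<noteq> -\<infinity>" by auto
  with z obtain y where y: "z = ereal y" by (cases z) auto
  show ?thesis
    apply (rule exI[of _ y])
    using z fr y by auto
qed

lemma gap:
  fixes S :: "nat set" and N M :: nat and y :: real
  assumes y: "y < 1/(1+real N)" and fr: "\<forall>M. \<exists>n\<ge>M. real (card (S \<inter> {1..n})) / real n \<le> y"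
    and M1: "M \<ge> 1"
  shows "\<exists>s\<ge>M. \<forall>e\<le>N. s+e \<notin> S"
proof (rule ccontr)
  assume "\<not> ?thesis"
  hence H: "\<forall>i. \<exists>e. e\<le>N \<and> M + i*(N+1) + e \<in> S" by (metis le_add1)
  then obtain g where g: "\<And>i. g i \<le> N \<and> M + i*(N+1) + g i \<in> S" by metis
  define c where "c = 1/(1+real N) - y"
  have c: "c > 0" using y by (simp add: c_def)
  define n0 where "n0 = nat \<lceil>(real M + real N + 1)/c\<rceil> + M"
  obtain n where n: "n \<ge> n0" and rat: "real (card (S \<inter> {1..n})) / real n \<le> y" using fr by blast
  have nM: "n \<ge> M" using n by (simp add: n0_def)
  have "real n \<ge> (real M + real N + 1)/c" using n unfolding n0_def by linarith
  hence cn: "c * real n \<ge> real M + real N + 1" using c by (simp add: field_simps)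
  have npos: "real n > 0" using nM M1 by simp
  have cardle: "real (card (S \<inter> {1..n})) \<le> y * real n" using rat npos by (simp add: field_simps)
  define B where "B = (n+1-M) div (N+1)"
  define h where "h i = M + i*(N+1) + g i" for i
  have hmono: "h i < h j" if "i < j" for i j
  proof -
    have "h i \<le> M + i*(N+1) + N" using g[of i] by (simp add: h_def)
    also have "\<dots> < M + (i+1)*(N+1)" by simp
    also have "\<dots> \<le> M + j*(N+1)" using that by (intro add_left_mono mult_le_mono1) simp
    also have "\<dots> \<le> h j" by (simp add: h_def)
    finally show ?thesis .
  qed
  have inj: "inj_on h {..<B}"
    by (intro inj_onI) (metis hmono less_irrefl linorder_neqE_nat)
  have sub: "h ` {..<B} \<subseteq> S \<inter> {1..n}"
  proof
    fix z assume "z \<in> h ` {..<B}"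
    then obtain i where i: "i < B" and z: "z = h i" by auto
    have "(i+1)*(N+1) \<le> B*(N+1)" using i by (intro mult_le_mono1) simp
    also have "\<dots> \<le> n+1-M" unfolding B_def by (rule div_times_less_eq_dividend)
    finally have "(i+1)*(N+1) \<le> n+1-M" .
    moreover have "M + i*(N+1) + N + 1 = M + (i+1)*(N+1)" by simp
    ultimately have "h i \<le> n" using g[of i] nM unfolding h_def by linarith
    moreover have "h i \<ge> 1" using M1 by (simp add: h_def)
    ultimately show "z \<in> S \<inter> {1..n}" using g[of i] z h_def by auto
  qed
  have "B \<le> card (S \<inter> {1..n})"
    using card_mono[OF _ sub] card_image[OF inj] by simp
  hence Bl: "real B \<le> y * real n" using cardle by linarith
  have "n+1-M < (N+1) + B*(N+1)" unfolding B_def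
    using dividend_less_div_times[of "N+1" "n+1-M"] by simp
  moreover have "(B+1)*(N+1) = (N+1) + B*(N+1)" by simp
  ultimately have "n + 1 < (B+1)*(N+1) + M" using nM by linarith
  hence "real (n + 1) < real ((B+1)*(N+1) + M)" by (simp only: of_nat_less_iff)
  hence L: "real n + 1 - real M < (real B + 1) * (real N + 1)" by (simp add: algebra_simps)
  have "(real B + 1) * (real N + 1) \<le> (y * real n + 1) * (real N + 1)"
    using Bl by (intro mult_right_mono) auto
  hence "real n + 1 - real M < (y * real n + 1) * (real N + 1)" using L by linarith
  hence A: "real n < (real N + 1) * (y * real n) + real N + real M" by (simp add: algebra_simps)
  have "(real N + 1) * (c * real n) = real n - (real N + 1) * (y * real n)"
    unfolding c_def by (simp add: field_simps)
  moreover have "(real N + 1) * (c * real n) \<ge> c * real n" using c npos by simp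
  ultimately show False using A cn by linarith
qed

definition blk :: "(nat \<Rightarrow> 'a) \<Rightarrow> nat \<Rightarrow> nat \<Rightarrow> nat \<Rightarrow> 'a list" where
  "blk x k m i = take m (drop (i*m) (pref x (k*m)))"

lemma blk_nth:
  assumes "i < k" "t < m"
  shows "blk x k m i ! t = x (i*m+t)"
proof -
  have "(i+1)*m \<le> k*m" using assms by (intro mult_le_mono1) simp
  hence "i*m + m \<le> k*m" by simp
  thus ?thesis using assms unfolding blk_def pref_def by (simp add: drop_map take_map)
qed

lemma length_lpow: "length (lpow u l) = l * length u"
  by (induction l) (simp_all add: lpow_def)

lemma lpow_nth: "j < l * length u \<Longrightarrow> lpow u l ! j = u ! (j mod length u)"
proof (induction l arbitrary: j)
  case 0 then show ?case by simp
next
  case (Suc l)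
  have e: "lpow u (Suc l) = u @ lpow u l" by (simp add: lpow_def)
  show ?case
  proof (cases "j < length u")
    case True then show ?thesis by (simp add: e nth_append)
  next
    case False
    hence "j - length u < l * length u" using Suc.prems by simp
    hence "lpow u l ! (j - length u) = u ! ((j - length u) mod length u)" using Suc.IH by blast
    then show ?thesis using False by (simp add: e nth_append le_mod_geq)
  qed
qed

lemma per:
  fixes f :: "nat \<Rightarrow> 'a"
  assumes "q > 0" "\<forall>r<R. f r = f (r+q)"
  shows "j < R+q \<Longrightarrow> f j = f (j mod q)"
proof (induction j rule: less_induct)
  case (less j)
  show ?case
  proof (cases "j < q")
    case True then show ?thesis by simp
  next
    case False
    have "f j = f ((j-q)+q)" using False by simp
    also have "\<dots> = f (j-q)" using assms(2) less.prems False by (metis add_diff_inverse_nat less_diff_conv2 not_less)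
    also have "\<dots> = f ((j-q) mod q)" using less.IH[of "j-q"] less.prems assms(1) False by simp
    also have "\<dots> = f (j mod q)" using False by (simp add: le_mod_geq)
    finally show ?thesis .
  qed
qed

lemma card_offdiag:
  assumes "finite S"
  shows "card {(a,b). a\<in>S \<and> b\<in>S \<and> a\<noteq>b} = card S * card S - card S"
proof -
  have e: "{(a,b). a\<in>S \<and> b\<in>S \<and> a\<noteq>b} = S \<times> S - (\<lambda>a. (a,a)) ` S" by auto
  have "card ((\<lambda>a. (a,a)) ` S) = card S" by (rule card_image) (auto intro: inj_onI)
  moreover have "(\<lambda>a. (a,a)) ` S \<subseteq> S \<times> S" by auto
  ultimately show ?thesis unfolding e using assms
    by (simp add: card_Diff_subset card_cartesian_product finite_cartesian_product)
qed

lemma find_power: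
  fixes x :: "nat \<Rightarrow> 'a" and k lam N s l :: nat
  assumes k1: "k \<ge> 1" and gapS: "\<forall>e\<le>N. s+e \<notin> AP x k lam" and s1: "s \<ge> 1"
    and Nb: "k*k - k < (N+1)*(lam*(lam+1))" and sl: "s \<ge> l*(k-1)*N" and l1: "l \<ge> 1"
  shows "\<exists>u. u\<noteq>[] \<and> length u \<le> (k-1)*N \<and> is_factor (lpow u l) x"
proof -
  define P where "P m = {(a,b). a<k \<and> b<k \<and> a\<noteq>b \<and> blk x k m a = blk x k m b}" for m
  define U where "U = {(a,b). a\<in>{..<k} \<and> b\<in>{..<k} \<and> a\<noteq>b}"
  have cardU: "card U = k*k - k" unfolding U_def using card_offdiag[of "{..<k}"] by simp
  have finU: "finite U" unfolding U_def
    by (rule finite_subset[of _ "{..<k} \<times> {..<k}"]) auto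
  have PU: "P m \<subseteq> U" for m unfolding P_def U_def by auto
  have Pcard: "lam*(lam+1) \<le> card (P (s+e))" if "e \<le> N" for e
  proof -
    define m where "m = s+e"
    have "m \<notin> AP x k lam" using gapS that m_def by simp
    hence "\<not> anti_power k lam (pref x (k*m))" using s1 m_def unfolding AP_def by simp
    moreover have "length (pref x (k*m)) = k*m" by (simp add: pref_def)
    ultimately obtain j where j: "j<k" and cj: "\<not> card {i. i < k \<and> blk x k m i = blk x k m j} \<le> lam"
      unfolding anti_power_def blk_def by blast
    define S where "S = {i. i < k \<and> blk x k m i = blk x k m j}"
    have finS: "finite S" unfolding S_def by simp
    have cS: "lam + 1 \<le> card S" using cj S_def by simp
    have "{(a,b). a\<in>S \<and> b\<in>S \<and> a\<noteq>b} \<subseteq> P m" unfolding S_def P_def by auto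
    hence "card {(a,b). a\<in>S \<and> b\<in>S \<and> a\<noteq>b} \<le> card (P m)"
      by (intro card_mono) (use finU PU finite_subset in blast)+
    hence "card S * card S - card S \<le> card (P m)" using card_offdiag[OF finS] by simp
    moreover have "card S * card S - card S = card S * (card S - 1)" by (simp add: diff_mult_distrib2)
    moreover have "(lam+1) * lam \<le> card S * (card S - 1)" using cS by (intro mult_le_mono) auto
    ultimately show ?thesis using m_def by (simp add: mult.commute)
  qed
  have "\<exists>e1 e2. e1 \<le> N \<and> e2 \<le> N \<and> e1 < e2 \<and> P (s+e1) \<inter> P (s+e2) \<noteq> {}"
  proof (rule ccontr)
    assume "\<not> ?thesis"
    hence dj: "\<forall>i\<in>{..N}. \<forall>j\<in>{..N}. i \<noteq> j \<longrightarrow> P (s+i) \<inter> P (s+j) = {}"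
      by (metis atMost_iff inf_commute linorder_neqE_nat)
    have finP: "\<forall>i\<in>{..N}. finite (P (s+i))" using finU PU finite_subset by blast
    have "card (\<Union>i\<in>{..N}. P (s+i)) = (\<Sum>i\<in>{..N}. card (P (s+i)))"
      using card_UN_disjoint[OF _ finP dj] by simp
    moreover have "(\<Sum>i\<in>{..N}. card (P (s+i))) \<ge> (N+1) * (lam*(lam+1))"
      using sum_bounded_below[of "{..N}" "lam*(lam+1)" "\<lambda>i. card (P (s+i))"] Pcard by simp
    moreover have "card (\<Union>i\<in>{..N}. P (s+i)) \<le> card U"
      using PU finU by (intro card_mono) auto
    ultimately show False using cardU Nb by linarith
  qed
  then obtain e1 e2 a0 b0 where e12: "e1 \<le> N" "e2 \<le> N" "e1 < e2"
    and ab0: "(a0,b0) \<in> P (s+e1)" "(a0,b0) \<in> P (s+e2)" by auto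
  obtain a b where ab: "a < b" "(a,b) \<in> P (s+e1)" "(a,b) \<in> P (s+e2)"
  proof (cases "a0 < b0")
    case True then show ?thesis using that ab0 by blast
  next
    case False
    hence "b0 < a0" using ab0 unfolding P_def by auto
    moreover have "(b0,a0) \<in> P (s+e1)" "(b0,a0) \<in> P (s+e2)" using ab0 unfolding P_def by auto
    ultimately show ?thesis using that by blast
  qed
  define m1 where "m1 = s+e1"
  define e where "e = e2 - e1"
  define d where "d = b - a"
  have m2: "s + e2 = m1 + e" using e12 unfolding m1_def e_def by simp
  have bd: "b = a + d" using ab d_def by simp
  have bk: "b < k" using ab unfolding P_def by auto
  have eq1: "x (a*m1+t) = x (b*m1+t)" if "t < m1" for t
  proof -
    have "blk x k m1 a = blk x k m1 b" using ab unfolding P_def m1_def by auto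
    thus ?thesis using blk_nth[of a k t m1 x] blk_nth[of b k t m1 x] that ab bk by simp
  qed
  have eq2: "x (a*(m1+e)+t) = x (b*(m1+e)+t)" if "t < m1+e" for t
  proof -
    have "blk x k (m1+e) a = blk x k (m1+e) b" using ab m2 unfolding P_def by auto
    thus ?thesis using blk_nth[of a k t "m1+e" x] blk_nth[of b k t "m1+e" x] that ab bk by simp
  qed
  define R where "R = m1 - a*e"
  define p0 where "p0 = a*(m1+e) + d*m1"
  define q where "q = d*e"
  have d1: "d \<ge> 1" and e1: "e \<ge> 1" using ab e12 d_def e_def by auto
  have q1: "q > 0" using d1 e1 q_def by simp
  have dk: "d \<le> k-1" using bk bd by simp
  have eN: "e \<le> N" using e12 e_def by simp
  have qb: "q \<le> (k-1)*N" unfolding q_def using dk eN by (intro mult_le_mono) auto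
  have perx: "\<forall>r<R. x (p0 + r) = x (p0 + r + q)"
  proof (intro allI impI)
    fix r assume r: "r < R"
    have t1: "a*e + r < m1" using r R_def by simp
    have "x (a*(m1+e) + r) = x (a*m1 + (a*e + r))" by (simp add: algebra_simps)
    also have "\<dots> = x (b*m1 + (a*e+r))" using eq1[OF t1] .
    also have "\<dots> = x (p0 + r)" unfolding p0_def bd by (simp add: algebra_simps)
    finally have A: "x (a*(m1+e) + r) = x (p0 + r)" .
    have "x (a*(m1+e) + r) = x (b*(m1+e) + r)" using eq2 t1 by simp
    also have "\<dots> = x (p0 + r + q)" unfolding p0_def q_def bd by (simp add: algebra_simps)
    finally show "x (p0 + r) = x (p0 + r + q)" using A by simp
  qed
  define u where "u = map x [p0..<p0+q]"
  have lu: "length u = q" by (simp add: u_def)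
  have "is_factor (lpow u l) x"
    unfolding is_factor_def
  proof (intro exI allI impI)
    fix j assume j: "j < length (lpow u l)"
    hence jl: "j < l*q" by (simp add: length_lpow lu)
    have aN: "a*e \<le> (k-1)*N" using ab bk eN by (intro mult_le_mono) auto
    have "(l-1)*q \<le> (l-1)*((k-1)*N)" using qb by simp
    moreover have "(l-1)*((k-1)*N) + (k-1)*N = l*(k-1)*N" using l1
      by (metis Suc_diff_le diff_Suc_1 mult.assoc mult_Suc add.commute)
    moreover have "m1 \<ge> s" by (simp add: m1_def)
    ultimately have "(l-1)*q \<le> R" using aN sl unfolding R_def by linarith
    moreover have "l*q = (l-1)*q + q" using l1 by (metis Suc_diff_le diff_Suc_1 mult_Suc add.commute)
    ultimately have "j < R + q" using jl by linarith
    hence "x (p0 + j) = x (p0 + j mod q)"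
      using per[of q R "\<lambda>r. x (p0 + r)" j] q1 perx by (simp add: add.assoc)
    moreover have "lpow u l ! j = u ! (j mod q)" using lpow_nth[of j l u] jl lu by simp
    moreover have "u ! (j mod q) = x (p0 + j mod q)" using q1 unfolding u_def by simp
    ultimately show "x (p0 + j) = lpow u l ! j" by simp
  qed
  moreover have "u \<noteq> []" using q1 lu by auto
  ultimately show ?thesis using qb lu by blast
qed

theorem corollary3p5:
  fixes x :: "nat \<Rightarrow> 'a" and k lam :: nat
  assumes "k \<ge> 1" and "lam \<ge> 1"
    and "lower_density (AP x k lam)
           < ereal (1 / (1 + real ((k^2 - k) div (lam^2 + lam))))"
  shows "\<forall>l::nat. l \<ge> 1 \<longrightarrow> (\<exists>u::'a list. u \<noteq> [] \<and>
           length u \<le> (k - 1) * ((k^2 - k) div (lam^2 + lam)) \<and> is_factor (lpow u l) x)"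
proof (intro allI impI)
  fix l :: nat assume l1: "l \<ge> 1"
  define N where "N = (k^2 - k) div (lam^2 + lam)"
  have "lower_density (AP x k lam) < ereal (1/(1+real N))" using assms(3) N_def by simp
  from dens_step[OF this] obtain y where y: "y < 1/(1+real N)"
    and fr: "\<forall>M. \<exists>n\<ge>M. real (card (AP x k lam \<inter> {1..n})) / real n \<le> y" by blast
  obtain s where s: "s \<ge> max 1 (l*(k-1)*N)" "\<forall>e\<le>N. s+e \<notin> AP x k lam"
    using gap[OF y fr, of "max 1 (l*(k-1)*N)"] by auto
  have d0: "lam^2 + lam > 0" using assms(2) by simp
  have "k^2 - k < (N+1)*(lam^2+lam)" unfolding N_def
    using dividend_less_div_times[OF d0, of "k^2-k"] by (simp add: mult.commute)
  hence Nb: "k*k - k < (N+1)*(lam*(lam+1))" by (simp add: power2_eq_square algebra_simps)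
  have "\<exists>u. u\<noteq>[] \<and> length u \<le> (k-1)*N \<and> is_factor (lpow u l) x"
    using find_power[OF assms(1) s(2) _ Nb _ l1] s(1) by auto
  thus "\<exists>u::'a list. u \<noteq> [] \<and>
           length u \<le> (k - 1) * ((k^2 - k) div (lam^2 + lam)) \<and> is_factor (lpow u l) x"
    unfolding N_def .
qed

end
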